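(* Let $I$ be a quasipolar general ring and $e=e^2\in I$. Then $eIe$ is a quasipolar general ring.
   Context: A general ring is an associative ring not necessarily having an identity; $eIe=\{eae\mid a\in I\}$. For a general ring $K$ and $p,q\in K$, $p*q=p+q-pq$; $Q(K)=\{q\in K\mid p*q=0=q*p\text{ for some }p\in K\}$; $\mathrm{comm}_K(a)=\{x\in K\mid xa=ax\}$, $\mathrm{comm}_K^2(a)=\{x\in K\mid xy=yx\text{ for all }y\in\mathrm{comm}_K(a)\}$; $QN(K)=\{q\in K\mid qx\in Q(K)\text{ for all }x\in\mathrm{comm}_K(q)\}$. An element $a\in K$ is quasipolar in $K$ if there is an idempotent $p\in\mathrm{comm}_K^2(a)$ with $a+p\in Q(K)$ and $a-ap\in QN(K)$; $K$ is a quasipolar general ring if every element of $K$ is quasipolar in $K$. *)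

theory Defs
  imports Main
begin

text \<open>A general ring is modelled by the type class ring (associative, not necessarily
unital). All notions are relativised to a subset K of the ambient ring, so that they
can be applied to the subring eIe with the inherited operations.\<close>

definition circ :: "'a::ring \<Rightarrow> 'a \<Rightarrow> 'a" where
  "circ p q = p + q - p * q"

definition Qset :: "'a::ring set \<Rightarrow> 'a set" where
  "Qset K = {q \<in> K. \<exists>p \<in> K. circ p q = 0 \<and> circ q p = 0}"

definition comm_in :: "'a::ring set \<Rightarrow> 'a \<Rightarrow> 'a set" where
  "comm_in K a = {x \<in> K. x * a = a * x}"

definition comm2_in :: "'a::ring set \<Rightarrow> 'a \<Rightarrow> 'a set" where
  "comm2_in K a = {x \<in> K. \<forall>y \<in> comm_in K a. x * y = y * x}"

definition QN :: "'a::ring set \<Rightarrow> 'a set" where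
  "QN K = {q \<in> K. \<forall>x \<in> comm_in K q. q * x \<in> Qset K}"

definition quasipolar_in :: "'a::ring set \<Rightarrow> 'a \<Rightarrow> bool" where
  "quasipolar_in K a \<longleftrightarrow>
     (\<exists>p. p * p = p \<and> p \<in> comm2_in K a \<and> a + p \<in> Qset K \<and> a - a * p \<in> QN K)"

definition quasipolar_general_ring :: "'a::ring set \<Rightarrow> bool" where
  "quasipolar_general_ring K \<longleftrightarrow> (\<forall>a \<in> K. quasipolar_in K a)"

end

theory Submission
  imports Defs
begin

lemma circ_comm:
  fixes e q x :: "'a::ring"
  assumes h1: "circ q x = 0" and h2: "circ x q = 0" and c: "e*x = x*e"
  shows "e*q = q*e"
proof -
  have xq: "x*q = x + q" using h2 by (simp add: circ_def algebra_simps)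
  have qx: "q*x = q + x" using h1 by (simp add: circ_def algebra_simps)
  define W where "W = e - e*x - e*q + e*x*q - q*e + q*e*x + q*e*q - q*e*x*q"
  have "W = e - e*x - e*q + e*(x*q) - q*e + q*e*x + q*e*q - q*e*(x*q)"
    by (simp add: W_def mult.assoc)
  also have "\<dots> = e - q*e" by (simp add: xq algebra_simps)
  finally have A: "W = e - q*e" .
  have t1: "e*x*q = x*e*q" by (simp add: c)
  have t2: "q*e*x = q*e + x*e" by (metis c mult.assoc qx distrib_right)
  have t3: "q*e*x*q = q*e*q + x*e*q" by (metis c mult.assoc qx distrib_right)
  have B: "W = e - e*q" unfolding W_def t1 t2 t3 by (simp add: algebra_simps c)
  from A B show ?thesis by simp
qed

lemma S_char:
  fixes e :: "'a::ring"
  assumes "e*e = e"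
  shows "y \<in> {e * a * e | a. True} \<longleftrightarrow> e*y = y \<and> y*e = y"
proof
  assume "y \<in> {e * a * e | a. True}"
  then obtain a where "y = e*a*e" by blast
  thus "e*y = y \<and> y*e = y" using assms by (simp add: mult.assoc[symmetric]) (simp add: mult.assoc)
next
  assume "e*y = y \<and> y*e = y"
  hence "y = e*y*e" by simp
  thus "y \<in> {e * a * e | a. True}" by blast
qed

lemma Q_sub:
  fixes e x :: "'a::ring"
  assumes ee: "e*e = e" and yq: "x \<in> Qset UNIV" and c: "e*x = x*e"
  shows "x*e \<in> Qset {e * a * e | a. True}"
proof -
  from yq obtain q where h1: "circ q x = 0" and h2: "circ x q = 0" by (auto simp: Qset_def)
  have eq: "e*q = q*e" by (rule circ_comm[OF h1 h2 c])
  have q'S: "q*e \<in> {e * a * e | a. True}"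
    unfolding S_char[OF ee] using ee eq by (metis mult.assoc)
  have yS: "x*e \<in> {e * a * e | a. True}" unfolding S_char[OF ee] using ee c by (metis mult.assoc)
  have "circ (q*e) (x*e) = (circ q x) * e"
  proof -
    have "q*e*(x*e) = q*x*e" by (metis c ee mult.assoc)
    thus ?thesis unfolding circ_def by (simp add: algebra_simps)
  qed
  hence 1: "circ (q*e) (x*e) = 0" using h1 by simp
  have "circ (x*e) (q*e) = (circ x q) * e"
  proof -
    have "x*e*(q*e) = x*q*e" by (metis eq ee mult.assoc)
    thus ?thesis unfolding circ_def by (simp add: algebra_simps)
  qed
  hence 2: "circ (x*e) (q*e) = 0" using h2 by simp
  show ?thesis unfolding Qset_def using q'S yS 1 2 by blast
qed

theorem theorem3p5:
  fixes e :: "'a::ring"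
  assumes "quasipolar_general_ring (UNIV :: 'a set)"
    and "e * e = e"
  shows "quasipolar_general_ring {e * a * e | a. True}"
  unfolding quasipolar_general_ring_def
proof
  let ?S = "{e * a * e | a. True}"
  note ee = assms(2)
  fix a assume aS: "a \<in> ?S"
  hence ea: "e*a = a" and ae: "a*e = a" using S_char[OF ee] by auto
  from assms(1) obtain p where pp: "p*p = p" and pc: "p \<in> comm2_in UNIV a"
    and pq: "a + p \<in> Qset UNIV" and pn: "a - a*p \<in> QN UNIV"
    unfolding quasipolar_general_ring_def quasipolar_in_def by blast
  have pcomm: "\<And>y. y*a = a*y \<Longrightarrow> p*y = y*p" using pc by (auto simp: comm2_in_def comm_in_def)
  have pe: "p*e = e*p" using pcomm[of e] ea ae by simp
  define p' where "p' = p*e"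
  have p'p': "p'*p' = p'" unfolding p'_def
    by (metis ee mult.assoc pe pp)
  have p'S: "p' \<in> ?S" unfolding S_char[OF ee] p'_def
    by (metis ee mult.assoc pe)
  have p'c: "p' \<in> comm2_in ?S a"
    unfolding comm2_in_def
  proof (rule CollectI, rule conjI[OF p'S], rule ballI)
    fix y assume "y \<in> comm_in ?S a"
    hence yS: "y \<in> ?S" and ya: "y*a = a*y" by (auto simp: comm_in_def)
    hence ey: "e*y = y" and ye: "y*e = y" using S_char[OF ee] by auto
    have "p'*y = p*y" unfolding p'_def by (simp add: mult.assoc ey)
    also have "\<dots> = y*p" using pcomm ya by simp
    also have "\<dots> = y*p'" unfolding p'_def by (metis mult.assoc pe ye)
    finally show "p'*y = y*p'" .
  qed
  have ap: "a*p' = a*p" unfolding p'_def by (metis ae mult.assoc pe)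
  have Q1: "a + p' \<in> Qset ?S"
  proof -
    have x: "a + p' = (a+p)*e" unfolding p'_def by (simp add: ae distrib_right)
    have "e*(a+p) = (a+p)*e" by (simp add: distrib_left distrib_right ea ae pe)
    from Q_sub[OF ee pq this] show ?thesis unfolding x .
  qed
  let ?b = "a - a*p"
  have eb: "e*?b = ?b" by (simp add: right_diff_distrib ea mult.assoc[symmetric])
  have be: "?b*e = ?b" by (metis ae ap left_diff_distrib mult.assoc p'_def)
  have bS: "?b \<in> ?S" unfolding S_char[OF ee] using eb be by simp
  have Q2: "a - a*p' \<in> QN ?S"
    unfolding QN_def ap
  proof (rule CollectI, rule conjI[OF bS], rule ballI)
    fix x assume "x \<in> comm_in ?S ?b"
    hence xS: "x \<in> ?S" and xb: "x*?b = ?b*x" by (auto simp: comm_in_def)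
    hence ex: "e*x = x" and xe: "x*e = x" using S_char[OF ee] by auto
    have "?b*x \<in> Qset UNIV" using pn xb unfolding QN_def comm_in_def by auto
    moreover have "e*(?b*x) = ?b*x*e" by (metis eb xe mult.assoc)
    ultimately have "?b*x*e \<in> Qset ?S" by (rule Q_sub[OF ee])
    thus "?b*x \<in> Qset ?S" by (metis xe mult.assoc)
  qed
  show "quasipolar_in ?S a" unfolding quasipolar_in_def
    using p'p' p'c Q1 Q2 by blast
qed

end
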